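(* Let $k\geq 1$ be an integer and let $m,n$ be integers with $m\geq n\geq 0$. Then \[C_{k,m}C_{k,n+1}-C_{k,n}C_{k,m+1}=-8(k-1)^{n+1}\,B_{k,m-n}.\]
   Context: For an integer $k\geq 1$, the generalized balancing numbers are defined by $B_{k,0}=0$, $B_{k,1}=1$ and $B_{k,n}=3kB_{k,n-1}+(1-k)B_{k,n-2}$ for $n\geq 2$; the generalized balancing-Lucas numbers are defined by $C_{k,0}=1$, $C_{k,1}=3$ and $C_{k,n}=3kC_{k,n-1}+(1-k)C_{k,n-2}$ for $n\geq 2$. *)

theory Defs
  imports Main
begin

fun genB :: "int \<Rightarrow> nat \<Rightarrow> int" where
  "genB k 0 = 0"
| "genB k (Suc 0) = 1"
| "genB k (Suc (Suc n)) = 3 * k * genB k (Suc n) + (1 - k) * genB k n"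

fun genC :: "int \<Rightarrow> nat \<Rightarrow> int" where
  "genC k 0 = 1"
| "genC k (Suc 0) = 3"
| "genC k (Suc (Suc n)) = 3 * k * genC k (Suc n) + (1 - k) * genC k n"

end

theory Submission
  imports Defs
begin

lemma base_aux:
  "genC k d * 3 - genC k (Suc d) = - 8 * (k - 1) * genB k d \<and>
   genC k (Suc d) * 3 - genC k (Suc (Suc d)) = - 8 * (k - 1) * genB k (Suc d)"
proof (induction d)
  case 0
  then show ?case by (simp add: algebra_simps)
next
  case (Suc d)
  then have h: "genC k (Suc d) * 3 - genC k (Suc (Suc d)) = - 8 * (k - 1) * genB k (Suc d)"
    and h0: "genC k d * 3 - genC k (Suc d) = - 8 * (k - 1) * genB k d" by auto
  have "genC k (Suc (Suc d)) * 3 - genC k (Suc (Suc (Suc d)))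
      = 3 * k * (genC k (Suc d) * 3 - genC k (Suc (Suc d))) + (1 - k) * (genC k d * 3 - genC k (Suc d))"
    by (simp add: algebra_simps)
  also have "\<dots> = - 8 * (k - 1) * genB k (Suc (Suc d))"
    unfolding h h0 by (simp add: algebra_simps)
  finally show ?case using h by simp
qed

lemma step_aux:
  "genC k (n + d) * genC k (n + 1) - genC k n * genC k (n + d + 1)
     = - 8 * (k - 1) ^ (n + 1) * genB k d"
proof (induction n)
  case 0
  then show ?case using base_aux[of k d] by simp
next
  case (Suc n)
  have "genC k (Suc n + d) * genC k (Suc n + 1) - genC k (Suc n) * genC k (Suc n + d + 1)
     = (k - 1) * (genC k (n + d) * genC k (n + 1) - genC k n * genC k (n + d + 1))"
  proof -
    have e1: "genC k (Suc n + 1) = 3 * k * genC k (Suc n) + (1 - k) * genC k n"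
      by (simp)
    have e2: "genC k (Suc n + d + 1) = 3 * k * genC k (Suc (n + d)) + (1 - k) * genC k (n + d)"
      by (simp)
    show ?thesis unfolding e1 e2 by (simp add: algebra_simps)
  qed
  also have "\<dots> = - 8 * (k - 1) ^ (Suc n + 1) * genB k d"
    unfolding Suc.IH by simp
  finally show ?case .
qed

theorem mainTheorem6:
  fixes k :: int and m n :: nat
  assumes "k \<ge> 1" and "m \<ge> n"
  shows "genC k m * genC k (n + 1) - genC k n * genC k (m + 1)
           = - 8 * (k - 1) ^ (n + 1) * genB k (m - n)"
proof -
  have m: "m = n + (m - n)" using assms by simp
  show ?thesis using step_aux[of k n "m - n"] by (subst (1 2) m) simp
qed

end
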